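(* Let $G$ be a graph and let $M$ be a matching in $G$ with parts $U$ and $W$ (so every edge of $M$ joins a vertex of $U$ to a vertex of $W$, and $U\cup W$ is the set of vertices covered by $M$), such that every vertex $w\in W$ has exactly one neighbor in $G$ among the vertices covered by $M$. Suppose that $|N_G(U)\setminus (W\cup N_G(W))|\geq k$. Then $f_o(G)\geq k/4$.
   Context: For a set $S$ of vertices, $N_G(S)=\bigcup_{s\in S}N_G(s)$ is the union of the neighborhoods of the vertices of $S$. For a graph $G$, $f_o(G)$ denotes the maximum of $|V_0|$ over all $V_0\subseteq V(G)$ such that the induced subgraph $G[V_0]$ has all degrees odd. *)

theory Defs
  imports Complex_Main
begin

definition graph :: "'a set \<Rightarrow> ('a \<Rightarrow> 'a \<Rightarrow> bool) \<Rightarrow> bool" where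
  "graph V E \<longleftrightarrow> finite V \<and> (\<forall>u v. E u v \<longrightarrow> E v u) \<and> (\<forall>v. \<not> E v v)
     \<and> (\<forall>u v. E u v \<longrightarrow> u \<in> V \<and> v \<in> V)"

definition nbhd :: "'a set \<Rightarrow> ('a \<Rightarrow> 'a \<Rightarrow> bool) \<Rightarrow> 'a set \<Rightarrow> 'a set" where
  "nbhd V E S = {v \<in> V. \<exists>s\<in>S. E s v}"

definition all_odd :: "('a \<Rightarrow> 'a \<Rightarrow> bool) \<Rightarrow> 'a set \<Rightarrow> bool" where
  "all_odd E S \<longleftrightarrow> (\<forall>v\<in>S. odd (card {u \<in> S. E v u}))"

definition f_o :: "'a set \<Rightarrow> ('a \<Rightarrow> 'a \<Rightarrow> bool) \<Rightarrow> nat" where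
  "f_o V E = Max {card S | S. S \<subseteq> V \<and> all_odd E S}"

text \<open>A matching with parts U and W, encoded as a set of oriented edges (u,w)
with u the endpoint in U and w the endpoint in W; distinct edges are vertex-disjoint,
and U, W are exactly the sets of such endpoints (so U \<union> W is the set of covered vertices).\<close>
definition matching_parts ::
  "('a \<Rightarrow> 'a \<Rightarrow> bool) \<Rightarrow> ('a \<times> 'a) set \<Rightarrow> 'a set \<Rightarrow> 'a set \<Rightarrow> bool" where
  "matching_parts E M U W \<longleftrightarrow>
     (\<forall>(u,w)\<in>M. E u w)
   \<and> (\<forall>e\<in>M. \<forall>e'\<in>M. e \<noteq> e' \<longrightarrow> {fst e, snd e} \<inter> {fst e', snd e'} = {})
   \<and> U = fst ` M \<and> W = snd ` M"

end

theory Submission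
  imports Defs
begin

definition evn_ind :: "('a \<Rightarrow> 'a \<Rightarrow> bool) \<Rightarrow> 'a set \<Rightarrow> bool" where
  "evn_ind E S \<longleftrightarrow> (\<forall>v\<in>S. even (card {u \<in> S. E v u}))"

lemma half_odd:
  assumes "finite U" "finite X" "\<forall>x\<in>X. \<exists>u\<in>U. R x u"
  shows "\<exists>T\<subseteq>U. card X \<le> 2 * card {x\<in>X. odd (card {u\<in>T. R x u})}"
  using assms
proof (induction U arbitrary: X rule: finite_induct)
  case empty
  then show ?case by auto
next
  case (insert u U)
  define Xu where "Xu = {x\<in>X. R x u}"
  define X0 where "X0 = X - Xu"
  have "\<forall>x\<in>X0. \<exists>u\<in>U. R x u" using insert.prems(2) unfolding X0_def Xu_def by auto
  moreover have "finite X0" using insert.prems(1) unfolding X0_def by auto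
  ultimately obtain T' where T': "T' \<subseteq> U" "card X0 \<le> 2 * card {x\<in>X0. odd (card {v\<in>T'. R x v})}"
    using insert.IH by blast
  have uT: "u \<notin> T'" using T' insert.hyps by auto
  have fT: "finite T'" using T' insert.hyps finite_subset by blast
  have e0: "{v\<in>insert u T'. R x v} = {v\<in>T'. R x v}" if "x \<in> X0" for x
    using that unfolding X0_def Xu_def by auto
  have e1: "card {v\<in>insert u T'. R x v} = Suc (card {v\<in>T'. R x v})" if "x \<in> Xu" for x
  proof -
    have "{v\<in>insert u T'. R x v} = insert u {v\<in>T'. R x v}" using that unfolding Xu_def by auto
    then show ?thesis using uT fT by simp
  qed
  define C where "C = {x\<in>Xu. odd (card {v\<in>T'. R x v})}"
  define D where "D = {x\<in>Xu. odd (card {v\<in>insert u T'. R x v})}"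
  have fXu: "finite Xu" using insert.prems(1) unfolding Xu_def by auto
  have CD: "C \<union> D = Xu" "C \<inter> D = {}" unfolding C_def D_def using e1 by auto
  have cCD: "card C + card D = card Xu" using CD fXu
    by (metis card_Un_disjoint finite_Un)
  have cX: "card X = card X0 + card Xu"
    unfolding X0_def using fXu insert.prems(1) Xu_def
    by (metis Diff_partition card_Diff_subset card_mono le_add_diff_inverse2 mem_Collect_eq subsetI)
  have split: "{x\<in>X. P x} = {x\<in>X0. P x} \<union> {x\<in>Xu. P x}"
    "{x\<in>X0. P x} \<inter> {x\<in>Xu. P x} = {}" for P
    unfolding X0_def Xu_def by auto
  have cs: "card {x\<in>X. P x} = card {x\<in>X0. P x} + card {x\<in>Xu. P x}" for P
    using split[of P] fXu \<open>finite X0\<close> by (simp add: card_Un_disjoint)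
  show ?case
  proof (cases "card Xu \<le> 2 * card C")
    case True
    have "card X \<le> 2 * card {x\<in>X. odd (card {v\<in>T'. R x v})}"
      using cs[of "\<lambda>x. odd (card {v\<in>T'. R x v})"] True T'(2) cX unfolding C_def by linarith
    then show ?thesis using T' by (intro exI[of _ T']) auto
  next
    case False
    have "{x\<in>X0. odd (card {v\<in>insert u T'. R x v})} = {x\<in>X0. odd (card {v\<in>T'. R x v})}"
      using e0 by auto
    then have "card {x\<in>X0. odd (card {v\<in>insert u T'. R x v})} = card {x\<in>X0. odd (card {v\<in>T'. R x v})}"
      by simp
    then have "card X \<le> 2 * card {x\<in>X. odd (card {v\<in>insert u T'. R x v})}"
      using cs[of "\<lambda>x. odd (card {v\<in>insert u T'. R x v})"] False T'(2) cX cCD unfolding D_def by linarith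
    then show ?thesis using T' by (intro exI[of _ "insert u T'"]) auto
  qed
qed


lemma toggle_card:
  fixes E :: "'a \<Rightarrow> 'a \<Rightarrow> bool"
  assumes fS: "finite S" and yN: "y \<in> N" and irr: "\<not> E y y"
  shows "card {z\<in>S. (if y\<in>N \<and> z\<in>N \<and> y\<noteq>z then \<not> E y z else E y z)} + card {z\<in>S. E y z}
         = 2 * card {z\<in>S-N. E y z} + card (S \<inter> N - {y})"
proof -
  define Q where "Q = {z\<in>S-N. E y z}"
  define P1 where "P1 = {z\<in>S \<inter> N - {y}. \<not> E y z}"
  define P2 where "P2 = {z\<in>S \<inter> N - {y}. E y z}"
  have fin: "finite Q" "finite P1" "finite P2" using fS unfolding Q_def P1_def P2_def by auto
  have a: "{z\<in>S. (if y\<in>N \<and> z\<in>N \<and> y\<noteq>z then \<not> E y z else E y z)} = Q \<union> P1"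
    using yN irr unfolding Q_def P1_def by auto
  have b: "{z\<in>S. E y z} = Q \<union> P2"
    using irr unfolding Q_def P2_def by auto
  have d: "S \<inter> N - {y} = P1 \<union> P2" unfolding P1_def P2_def by auto
  have i1: "Q \<inter> P1 = {}" "Q \<inter> P2 = {}" "P1 \<inter> P2 = {}" unfolding Q_def P1_def P2_def by auto
  have "card (Q \<union> P1) = card Q + card P1" using fin i1 by (simp add: card_Un_disjoint)
  moreover have "card (Q \<union> P2) = card Q + card P2" using fin i1 by (simp add: card_Un_disjoint)
  moreover have "card (P1 \<union> P2) = card P1 + card P2" using fin i1 by (simp add: card_Un_disjoint)
  ultimately show ?thesis unfolding a b d Q_def[symmetric] by simp
qed

lemma gallai_step:
  fixes E :: "'a \<Rightarrow> 'a \<Rightarrow> bool"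
  assumes fin: "finite V" and sym: "\<forall>x y. E x y \<longrightarrow> E y x" and irr: "\<forall>x. \<not> E x x"
    and vV: "v \<in> V" and Nd: "N = {u\<in>V. E v u}" and oN: "odd (card N)"
    and AB: "A' \<union> B' = V - {v}" "A' \<inter> B' = {}"
    and E'd: "E' = (\<lambda>x z. if x\<in>N \<and> z\<in>N \<and> x\<noteq>z then \<not> E x z else E x z)"
    and eA: "evn_ind E' A'" and eB: "evn_ind E' B'" and eAN: "even (card (A' \<inter> N))"
  shows "evn_ind E (insert v A') \<and> evn_ind E B'"
proof -
  have NV: "N \<subseteq> V - {v}" using Nd irr by auto
  have fA: "finite A'" "finite B'" using AB fin by (metis finite_Diff finite_Un)+
  have "N = (A' \<inter> N) \<union> (B' \<inter> N)" using NV AB by auto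
  then have "card N = card (A' \<inter> N) + card (B' \<inter> N)"
    using fA AB by (metis card_Un_disjoint disjoint_iff finite_Int inf_commute IntE)
  then have oBN: "odd (card (B' \<inter> N))" using oN eAN by simp
  have vA: "v \<notin> A'" "v \<notin> B'" using AB by auto
  have AV: "A' \<subseteq> V" "B' \<subseteq> V" using AB by auto
  have yN: "E y v \<longleftrightarrow> y \<in> N" if "y \<in> V" for y using that Nd sym by auto
  have same: "{u\<in>S. E' y u} = {u\<in>S. E y u}" if "y \<notin> N" for y S
    using that E'd by auto
  have tog: "card {u\<in>S. E' y u} + card {u\<in>S. E y u} = 2 * card {z\<in>S-N. E y z} + card (S \<inter> N - {y})"
    if "y \<in> N" "finite S" for y S
    using toggle_card[of S y N E] that irr E'd by simp
  have "evn_ind E (insert v A')"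
    unfolding evn_ind_def
  proof
    fix y assume y: "y \<in> insert v A'"
    show "even (card {u \<in> insert v A'. E y u})"
    proof (cases "y = v")
      case True
      have "{u \<in> insert v A'. E y u} = A' \<inter> N" using True Nd AV irr by auto
      then show ?thesis using eAN by simp
    next
      case False
      then have yA: "y \<in> A'" using y by auto
      have e1: "even (card {u\<in>A'. E' y u})" using eA yA unfolding evn_ind_def by auto
      show ?thesis
      proof (cases "y \<in> N")
        case True
        have "{u \<in> insert v A'. E y u} = insert v {u\<in>A'. E y u}" using True yN AV yA by auto
        then have c: "card {u \<in> insert v A'. E y u} = Suc (card {u\<in>A'. E y u})" using vA fA by simp
        have "card (A' \<inter> N - {y}) = card (A' \<inter> N) - 1" using True yA fA by simp
        moreover have "card (A' \<inter> N) > 0" using True yA fA card_gt_0_iff by blast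
        ultimately have "odd (card (A' \<inter> N - {y}))" using eAN by simp
        then have "odd (card {u\<in>A'. E y u})" using tog[OF True fA(1)] e1 by presburger
        then show ?thesis using c by simp
      next
        case False
        have "{u \<in> insert v A'. E y u} = {u\<in>A'. E y u}" using False yN AV yA by auto
        then show ?thesis using e1 same[OF False] by simp
      qed
    qed
  qed
  moreover have "evn_ind E B'"
    unfolding evn_ind_def
  proof
    fix y assume yB: "y \<in> B'"
    have e1: "even (card {u\<in>B'. E' y u})" using eB yB unfolding evn_ind_def by auto
    show "even (card {u \<in> B'. E y u})"
    proof (cases "y \<in> N")
      case True
      have "card (B' \<inter> N - {y}) = card (B' \<inter> N) - 1" using True yB fA by simp
      moreover have "card (B' \<inter> N) > 0" using True yB fA card_gt_0_iff by blast
      ultimately have "even (card (B' \<inter> N - {y}))" using oBN by simp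
      then show ?thesis using tog[OF True fA(2)] e1 by presburger
    next
      case False
      then show ?thesis using e1 same[OF False] by simp
    qed
  qed
  ultimately show ?thesis by simp
qed

lemma gallai:
  fixes E :: "'a \<Rightarrow> 'a \<Rightarrow> bool"
  assumes "finite V" "\<forall>x y. E x y \<longrightarrow> E y x" "\<forall>x. \<not> E x x"
  shows "\<exists>A B. A \<union> B = V \<and> A \<inter> B = {} \<and> evn_ind E A \<and> evn_ind E B"
  using assms
proof (induction "card V" arbitrary: V E rule: less_induct)
  case less
  show ?case
  proof (cases "evn_ind E V")
    case True
    then show ?thesis by (intro exI[of _ V] exI[of _ "{}"]) (auto simp: evn_ind_def)
  next
    case False
    then obtain v where vV: "v \<in> V" and oN: "odd (card {u\<in>V. E v u})"
      unfolding evn_ind_def by auto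
    define N where "N = {u\<in>V. E v u}"
    define E' where "E' = (\<lambda>x z. if x\<in>N \<and> z\<in>N \<and> x\<noteq>z then \<not> E x z else E x z)"
    have s': "\<forall>x y. E' x y \<longrightarrow> E' y x" using less.prems unfolding E'_def by auto
    have i': "\<forall>x. \<not> E' x x" using less.prems unfolding E'_def by auto
    have "card (V - {v}) < card V" using vV less.prems(1) by (rule card_Diff1_less[rotated])
    then obtain A' B' where AB: "A' \<union> B' = V - {v}" "A' \<inter> B' = {}" "evn_ind E' A'" "evn_ind E' B'"
      using less.hyps[of "V - {v}" E'] s' i' less.prems(1) by auto
    have NV: "N \<subseteq> V - {v}" using N_def less.prems by auto
    have fA: "finite A'" "finite B'" using AB less.prems(1) by (metis finite_Diff finite_Un)+
    have "N = (A' \<inter> N) \<union> (B' \<inter> N)" using NV AB by auto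
    then have cN: "card N = card (A' \<inter> N) + card (B' \<inter> N)"
      using fA AB by (metis card_Un_disjoint disjoint_iff finite_Int inf_commute IntE)
    show ?thesis
    proof (cases "even (card (A' \<inter> N))")
      case True
      have "evn_ind E (insert v A') \<and> evn_ind E B'"
        using gallai_step[OF less.prems vV N_def _ AB(1,2) E'_def AB(3,4) True] oN N_def by simp
      moreover have "insert v A' \<union> B' = V" "insert v A' \<inter> B' = {}" using AB vV by auto
      ultimately show ?thesis by blast
    next
      case False
      then have eB: "even (card (B' \<inter> N))" using cN oN N_def by simp
      have AB1: "B' \<union> A' = V - {v}" "B' \<inter> A' = {}" using AB by auto
      have "evn_ind E (insert v B') \<and> evn_ind E A'"
        using gallai_step[OF less.prems vV N_def _ AB1 E'_def AB(4,3) eB] oN N_def by simp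
      moreover have "A' \<union> insert v B' = V" "A' \<inter> insert v B' = {}" using AB vV by auto
      ultimately show ?thesis by blast
    qed
  qed
qed


theorem lemma2p3:
  fixes V :: "'a set" and E :: "'a \<Rightarrow> 'a \<Rightarrow> bool"
    and M :: "('a \<times> 'a) set" and U W :: "'a set" and k :: real
  assumes "graph V E"
    and "matching_parts E M U W"
    and "\<forall>w\<in>W. card {x \<in> U \<union> W. E w x} = 1"
    and "real (card (nbhd V E U - (W \<union> nbhd V E W))) \<ge> k"
  shows "real (f_o V E) \<ge> k / 4"
proof -
  have finV: "finite V" and sym: "\<forall>x y. E x y \<longrightarrow> E y x" and irr: "\<forall>x. \<not> E x x"
    and inV: "\<forall>u v. E u v \<longrightarrow> u \<in> V \<and> v \<in> V"
    using assms(1) unfolding graph_def by auto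
  have ME: "\<forall>(u,w)\<in>M. E u w" and Mdis: "\<forall>e\<in>M. \<forall>e'\<in>M. e \<noteq> e' \<longrightarrow> {fst e, snd e} \<inter> {fst e', snd e'} = {}"
    and Ud: "U = fst ` M" and Wd: "W = snd ` M"
    using assms(2) unfolding matching_parts_def by auto
  define X where "X = nbhd V E U - (W \<union> nbhd V E W)"
  have Ein: "E u w" if "(u,w) \<in> M" for u w using ME that by blast
  have UV: "U \<subseteq> V"
  proof
    fix u assume "u \<in> U"
    then obtain e where e: "e \<in> M" "u = fst e" using Ud by blast
    then have "E u (snd e)" using Ein[of u "snd e"] by simp
    then show "u \<in> V" using inV by blast
  qed
  have WV: "W \<subseteq> V"
  proof
    fix w assume "w \<in> W"
    then obtain e where e: "e \<in> M" "w = snd e" using Wd by blast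
    then have "E (fst e) w" using Ein[of "fst e" w] by simp
    then show "w \<in> V" using inV by blast
  qed
  have finU: "finite U" using UV finV finite_subset by blast
  have UW: "U \<inter> W = {}"
  proof (rule ccontr)
    assume "U \<inter> W \<noteq> {}"
    then obtain x where "x \<in> U" "x \<in> W" by blast
    then obtain e e' where e: "e \<in> M" "e' \<in> M" "x = fst e" "x = snd e'" using Ud Wd by blast
    show False
    proof (cases "e = e'")
      case True
      have "E (fst e) (snd e)" using Ein[of "fst e" "snd e"] e(1) by simp
      then have "E x x" using True e by simp
      then show False using irr by blast
    next
      case False
      then have "{fst e, snd e} \<inter> {fst e', snd e'} = {}" using Mdis e(1,2) by blast
      then show False using e(3,4) by blast
    qed
  qed
  have "\<forall>u\<in>U. \<exists>w. (u, w) \<in> M" using Ud by force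
  from bchoice[OF this] obtain p where p: "\<forall>u\<in>U. (u, p u) \<in> M" by blast
  have pW: "p u \<in> W" "E u (p u)" "E (p u) u" if "u \<in> U" for u
  proof -
    have m: "(u, p u) \<in> M" using p that by blast
    show "p u \<in> W" using m Wd by (metis image_eqI snd_conv)
    show "E u (p u)" using m Ein by blast
    then show "E (p u) u" using sym by blast
  qed
  have uniq: "a = b" if "w \<in> W" "a \<in> U \<union> W" "b \<in> U \<union> W" "E w a" "E w b" for w a b
  proof -
    have "card {x \<in> U \<union> W. E w x} = 1" using assms(3) that(1) by blast
    then obtain q where q: "{x \<in> U \<union> W. E w x} = {q}" by (rule card_1_singletonE)
    have "a \<in> {x \<in> U \<union> W. E w x}" "b \<in> {x \<in> U \<union> W. E w x}" using that by simp_all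
    then show ?thesis unfolding q by simp
  qed
  have XV: "X \<subseteq> V" unfolding X_def nbhd_def by blast
  have nbW: "x \<in> nbhd V E W" if "x \<in> V" "w \<in> W" "E w x" for x w
    using that unfolding nbhd_def by blast
  have XU: "X \<inter> U = {}" "X \<inter> W = {}"
  proof -
    show "X \<inter> U = {}"
    proof (rule ccontr)
      assume "X \<inter> U \<noteq> {}"
      then obtain x where x: "x \<in> X" "x \<in> U" by blast
      then have "x \<in> nbhd V E W" using nbW[of x "p x"] pW[of x] XV by blast
      then show False using x(1) unfolding X_def by blast
    qed
    show "X \<inter> W = {}" unfolding X_def by blast
  qed
  have XnW: "\<not> E w x" "\<not> E x w" if "x \<in> X" "w \<in> W" for x w
  proof -
    show "\<not> E w x"
    proof
      assume "E w x"
      then have "x \<in> nbhd V E W" using nbW[of x w] that XV by blast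
      then show False using that(1) unfolding X_def by blast
    qed
    then show "\<not> E x w" using sym by blast
  qed
  have finX: "finite X" using finV XV finite_subset by blast
  have "\<forall>x\<in>X. \<exists>u\<in>U. E x u"
  proof
    fix x assume that: "x \<in> X"
    have "x \<in> nbhd V E U" using that unfolding X_def by blast
    then obtain u where "u \<in> U" "E u x" unfolding nbhd_def by blast
    then show "\<exists>u\<in>U. E x u" using sym by blast
  qed
  from half_odd[OF finU finX this] obtain T where T: "T \<subseteq> U" "card X \<le> 2 * card {x\<in>X. odd (card {u\<in>T. E x u})}"
    by blast
  define Od where "Od = {x\<in>X. odd (card {u\<in>T. E x u})}"
  have finO: "finite Od" using finX unfolding Od_def by auto
  from gallai[OF finO sym irr] obtain A B where AB: "A \<union> B = Od" "A \<inter> B = {}" "evn_ind E A" "evn_ind E B"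
    by blast
  have fAB: "finite A" "finite B" using AB(1) finO by (metis finite_Un)+
  have cAB: "card A + card B = card Od" using AB(1,2) fAB card_Un_disjoint[of A B] by simp
  obtain Y where Y: "Y \<subseteq> Od" "evn_ind E Y" "card Od \<le> 2 * card Y"
  proof (cases "card B \<le> card A")
    case True
    have "A \<subseteq> Od" "card Od \<le> 2 * card A" using AB(1) True cAB by auto
    then show ?thesis using that AB(3) by blast
  next
    case False
    have "B \<subseteq> Od" "card Od \<le> 2 * card B" using AB(1) False cAB by auto
    then show ?thesis using that AB(4) by blast
  qed
  have YX: "Y \<subseteq> X" using Y Od_def by auto
  have finT: "finite T" using T finU finite_subset by blast
  have finY: "finite Y" using YX finX finite_subset by blast
  define T2 where "T2 = {u\<in>T. even (card {z\<in>Y \<union> T. E u z})}"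
  define W1 where "W1 = p ` T2"
  define S where "S = Y \<union> T \<union> W1"
  have W1W: "W1 \<subseteq> W" using pW T unfolding W1_def T2_def by auto
  have finS: "finite S" unfolding S_def W1_def using finY finT T2_def by auto
  have SV: "S \<subseteq> V" unfolding S_def using YX XV T UV WV W1W by auto
  have odd: "all_odd E S"
    unfolding all_odd_def
  proof
    fix y assume yS: "y \<in> S"
    consider "y \<in> Y" | "y \<in> T" | "y \<in> W1" using yS S_def by auto
    then show "odd (card {u \<in> S. E y u})"
    proof cases
      case 1
      have yO: "odd (card {u\<in>T. E y u})" using 1 Y(1) Od_def by auto
      have ev: "even (card {u\<in>Y. E y u})" using 1 Y(2) unfolding evn_ind_def by blast
      have "{u \<in> S. E y u} = {u\<in>Y. E y u} \<union> {u\<in>T. E y u}"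
        unfolding S_def using XnW 1 YX W1W by blast
      moreover have "{u\<in>Y. E y u} \<inter> {u\<in>T. E y u} = {}" using YX T XU by blast
      ultimately have "card {u \<in> S. E y u} = card {u\<in>Y. E y u} + card {u\<in>T. E y u}"
        using finY finT by (simp add: card_Un_disjoint)
      then show ?thesis using yO ev by simp
    next
      case 2
      have yU: "y \<in> U" using 2 T by auto
      have nb: "E y w \<Longrightarrow> w \<in> W1 \<Longrightarrow> w = p y \<and> y \<in> T2" for w
      proof -
        assume a: "E y w" "w \<in> W1"
        then obtain u' where u': "u' \<in> T2" "w = p u'" using W1_def by auto
        have u'U: "u' \<in> U" using u' T T2_def by auto
        have wW: "w \<in> W" and Ewu: "E w u'" using pW[OF u'U] u'(2) by auto
        have Ewy: "E w y" using a(1) sym by blast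
        have "u' = y" using uniq[OF wW _ _ Ewu Ewy] u'U yU by blast
        then show ?thesis using u' by simp
      qed
      have pyn: "p y \<notin> Y \<union> T" using pW[OF yU] YX XU T UW by blast
      show ?thesis
      proof (cases "y \<in> T2")
        case True
        have "{u \<in> S. E y u} = insert (p y) {z\<in>Y \<union> T. E y z}"
          unfolding S_def using nb True pW[OF yU] W1_def by blast
        then have "card {u \<in> S. E y u} = Suc (card {z\<in>Y \<union> T. E y z})"
          using pyn finY finT by simp
        then show ?thesis using True T2_def by simp
      next
        case False
        have "{u \<in> S. E y u} = {z\<in>Y \<union> T. E y z}"
          unfolding S_def using nb False by blast
        then show ?thesis using False 2 T2_def by simp
      qed
    next
      case 3
      then obtain u where u: "u \<in> T2" "y = p u" using W1_def by auto
      have uU: "u \<in> U" using u T T2_def by auto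
      have yW: "y \<in> W" using 3 W1W by auto
      have "{z \<in> S. E y z} = {u}"
      proof
        show "{u} \<subseteq> {z \<in> S. E y z}" using u uU pW S_def T2_def by auto
        show "{z \<in> S. E y z} \<subseteq> {u}"
        proof
          fix z assume z: "z \<in> {z \<in> S. E y z}"
          then have "z \<notin> Y" using XnW YX yW by blast
          then have "z \<in> U \<union> W" using z S_def T W1W by auto
          moreover have "E y z" using z by blast
          moreover have "E y u" using pW(3)[OF uU] u(2) by simp
          moreover have "u \<in> U \<union> W" using uU by blast
          ultimately have "z = u" using uniq[OF yW] by blast
          then show "z \<in> {u}" by simp
        qed
      qed
      then show ?thesis by simp
    qed
  qed
  have "card S \<in> {card S | S. S \<subseteq> V \<and> all_odd E S}" using SV odd by blast
  moreover have "finite {card S | S. S \<subseteq> V \<and> all_odd E S}"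
  proof -
    have "{card S | S. S \<subseteq> V \<and> all_odd E S} \<subseteq> card ` Pow V" by auto
    then show ?thesis using finV finite_subset by blast
  qed
  ultimately have "card S \<le> f_o V E" unfolding f_o_def by (simp add: Max_ge)
  moreover have "card Y \<le> card S" using finS unfolding S_def by (intro card_mono) auto
  ultimately have "card X \<le> 4 * f_o V E" using T(2) Y(3) unfolding Od_def[symmetric] by linarith
  then have "real (card X) \<le> 4 * real (f_o V E)" by linarith
  then show ?thesis using assms(4) X_def by simp
qed

end
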